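(* Let $\mathcal{D}$ be a dagger category equipped with a conservative dagger functor $F\colon\mathcal{D}\to\mathrm{Hilb}$. Suppose that every positive endomorphism $f\colon c\to c$ in $\mathcal{D}$ is end-positive. Then $\mathcal{D}$ is minimal.
   Context: A dagger category is a category with an identity-on-objects functor $\dagger$ to its opposite with $f^{\dagger\dagger}=f$; a dagger functor satisfies $F(f^\dagger)=F(f)^\dagger$. $\mathrm{Hilb}$ is the dagger category of finite-dimensional complex Hilbert spaces with adjoints. An endomorphism $f\colon c\to c$ is positive if $f=g^\dagger g$ for some morphism $g\colon c\to c'$, and end-positive if $f=g^\dagger g$ for some endomorphism $g\colon c\to c$. A functor is conservative if it reflects isomorphisms. $\mathcal{D}$ is minimal if the map $\pi_0^U(\mathcal{D})\to\pi_0(\mathcal{D})$ from unitary-isomorphism classes of objects ($u$ unitary iff $u^\dagger=u^{-1}$) to isomorphism classes is bijective. *)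

theory Defs
  imports "Jordan_Normal_Form.Schur_Decomposition"
begin

text \<open>A (small, set-carried) category together with a candidate dagger operation.
  Composition convention: Comp g f is "g after f", defined when Cod f = Dom g.\<close>

record ('o, 'm) dcat =
  Obj  :: "'o set"
  Arr  :: "'m set"
  Dom  :: "'m \<Rightarrow> 'o"
  Cod  :: "'m \<Rightarrow> 'o"
  Idm  :: "'o \<Rightarrow> 'm"
  Comp :: "'m \<Rightarrow> 'm \<Rightarrow> 'm"
  Dag  :: "'m \<Rightarrow> 'm"

definition is_category :: "('o, 'm) dcat \<Rightarrow> bool" where
  "is_category C \<longleftrightarrow>
     (\<forall>f\<in>Arr C. Dom C f \<in> Obj C \<and> Cod C f \<in> Obj C) \<and>
     (\<forall>a\<in>Obj C. Idm C a \<in> Arr C \<and> Dom C (Idm C a) = a \<and> Cod C (Idm C a) = a) \<and>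
     (\<forall>f\<in>Arr C. \<forall>g\<in>Arr C. Cod C f = Dom C g \<longrightarrow>
         Comp C g f \<in> Arr C \<and> Dom C (Comp C g f) = Dom C f \<and> Cod C (Comp C g f) = Cod C g) \<and>
     (\<forall>f\<in>Arr C. Comp C f (Idm C (Dom C f)) = f \<and> Comp C (Idm C (Cod C f)) f = f) \<and>
     (\<forall>f\<in>Arr C. \<forall>g\<in>Arr C. \<forall>h\<in>Arr C. Cod C f = Dom C g \<longrightarrow> Cod C g = Dom C h \<longrightarrow>
         Comp C h (Comp C g f) = Comp C (Comp C h g) f)"

definition is_dagger_category :: "('o, 'm) dcat \<Rightarrow> bool" where
  "is_dagger_category C \<longleftrightarrow> is_category C \<and>
     (\<forall>f\<in>Arr C. Dag C f \<in> Arr C \<and> Dom C (Dag C f) = Cod C f \<and> Cod C (Dag C f) = Dom C f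
                 \<and> Dag C (Dag C f) = f) \<and>
     (\<forall>a\<in>Obj C. Dag C (Idm C a) = Idm C a) \<and>
     (\<forall>f\<in>Arr C. \<forall>g\<in>Arr C. Cod C f = Dom C g \<longrightarrow>
         Dag C (Comp C g f) = Comp C (Dag C f) (Dag C g))"

text \<open>Hilb: finite-dimensional complex Hilbert spaces, modelled by the spaces C^n
  (object n :: nat) with linear maps C^m \<rightarrow> C^n given by n \<times> m complex matrices,
  and dagger the conjugate transpose (adjoint).\<close>
definition Hilb :: "(nat, complex mat) dcat" where
  "Hilb = \<lparr> Obj = UNIV, Arr = UNIV, Dom = dim_col, Cod = dim_row,
            Idm = (\<lambda>n. 1\<^sub>m n), Comp = (\<lambda>g f. g * f), Dag = mat_adjoint \<rparr>"

definition is_iso :: "('o, 'm) dcat \<Rightarrow> 'm \<Rightarrow> bool" where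
  "is_iso C f \<longleftrightarrow> f \<in> Arr C \<and> (\<exists>g\<in>Arr C. Dom C g = Cod C f \<and> Cod C g = Dom C f \<and>
      Comp C g f = Idm C (Dom C f) \<and> Comp C f g = Idm C (Cod C f))"

definition is_unitary :: "('o, 'm) dcat \<Rightarrow> 'm \<Rightarrow> bool" where
  "is_unitary C u \<longleftrightarrow> u \<in> Arr C \<and>
      Comp C (Dag C u) u = Idm C (Dom C u) \<and> Comp C u (Dag C u) = Idm C (Cod C u)"

definition isomorphic :: "('o, 'm) dcat \<Rightarrow> 'o \<Rightarrow> 'o \<Rightarrow> bool" where
  "isomorphic C a b \<longleftrightarrow> (\<exists>f. is_iso C f \<and> Dom C f = a \<and> Cod C f = b)"

definition unitarily_isomorphic :: "('o, 'm) dcat \<Rightarrow> 'o \<Rightarrow> 'o \<Rightarrow> bool" where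
  "unitarily_isomorphic C a b \<longleftrightarrow> (\<exists>u. is_unitary C u \<and> Dom C u = a \<and> Cod C u = b)"

definition functor_on :: "('o, 'm) dcat \<Rightarrow> ('p, 'n) dcat \<Rightarrow> ('o \<Rightarrow> 'p) \<Rightarrow> ('m \<Rightarrow> 'n) \<Rightarrow> bool" where
  "functor_on C D Fo Fm \<longleftrightarrow>
     (\<forall>a\<in>Obj C. Fo a \<in> Obj D) \<and>
     (\<forall>f\<in>Arr C. Fm f \<in> Arr D \<and> Dom D (Fm f) = Fo (Dom C f) \<and> Cod D (Fm f) = Fo (Cod C f)) \<and>
     (\<forall>a\<in>Obj C. Fm (Idm C a) = Idm D (Fo a)) \<and>
     (\<forall>f\<in>Arr C. \<forall>g\<in>Arr C. Cod C f = Dom C g \<longrightarrow> Fm (Comp C g f) = Comp D (Fm g) (Fm f))"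

definition dagger_functor :: "('o, 'm) dcat \<Rightarrow> ('p, 'n) dcat \<Rightarrow> ('o \<Rightarrow> 'p) \<Rightarrow> ('m \<Rightarrow> 'n) \<Rightarrow> bool" where
  "dagger_functor C D Fo Fm \<longleftrightarrow> functor_on C D Fo Fm \<and>
     (\<forall>f\<in>Arr C. Fm (Dag C f) = Dag D (Fm f))"

definition conservative :: "('o, 'm) dcat \<Rightarrow> ('p, 'n) dcat \<Rightarrow> ('m \<Rightarrow> 'n) \<Rightarrow> bool" where
  "conservative C D Fm \<longleftrightarrow> (\<forall>f\<in>Arr C. is_iso D (Fm f) \<longrightarrow> is_iso C f)"

definition positive :: "('o, 'm) dcat \<Rightarrow> 'm \<Rightarrow> bool" where
  "positive C f \<longleftrightarrow> (\<exists>g\<in>Arr C. Dom C g = Dom C f \<and> f = Comp C (Dag C g) g)"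

definition end_positive :: "('o, 'm) dcat \<Rightarrow> 'm \<Rightarrow> bool" where
  "end_positive C f \<longleftrightarrow> (\<exists>g\<in>Arr C. Dom C g = Dom C f \<and> Cod C g = Dom C f \<and>
      f = Comp C (Dag C g) g)"

definition iso_classes :: "('o, 'm) dcat \<Rightarrow> 'o set set" where
  "iso_classes C = Obj C // {(a, b). a \<in> Obj C \<and> b \<in> Obj C \<and> isomorphic C a b}"

definition unitary_classes :: "('o, 'm) dcat \<Rightarrow> 'o set set" where
  "unitary_classes C = Obj C // {(a, b). a \<in> Obj C \<and> b \<in> Obj C \<and> unitarily_isomorphic C a b}"

text \<open>The canonical map \<pi>_0^U(C) \<rightarrow> \<pi>_0(C): send a unitary class to the iso class containing it.\<close>
definition class_map :: "('o, 'm) dcat \<Rightarrow> 'o set \<Rightarrow> 'o set" where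
  "class_map C X = {b \<in> Obj C. \<exists>a\<in>X. isomorphic C a b}"

definition minimal :: "('o, 'm) dcat \<Rightarrow> bool" where
  "minimal C \<longleftrightarrow> bij_betw (class_map C) (unitary_classes C) (iso_classes C)"

end

theory Submission
  imports Defs
begin

locale dc =
  fixes C :: "('o, 'm) dcat"
  assumes dc: "is_dagger_category C"
begin

lemma arr_dom: "f \<in> Arr C \<Longrightarrow> Dom C f \<in> Obj C"
  using dc unfolding is_dagger_category_def is_category_def by blast
lemma arr_cod: "f \<in> Arr C \<Longrightarrow> Cod C f \<in> Obj C"
  using dc unfolding is_dagger_category_def is_category_def by blast
lemma idm_arr: "a \<in> Obj C \<Longrightarrow> Idm C a \<in> Arr C"
  using dc unfolding is_dagger_category_def is_category_def by blast
lemma idm_dom: "a \<in> Obj C \<Longrightarrow> Dom C (Idm C a) = a"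
  using dc unfolding is_dagger_category_def is_category_def by blast
lemma idm_cod: "a \<in> Obj C \<Longrightarrow> Cod C (Idm C a) = a"
  using dc unfolding is_dagger_category_def is_category_def by blast
lemma comp_arr: "f \<in> Arr C \<Longrightarrow> g \<in> Arr C \<Longrightarrow> Cod C f = Dom C g \<Longrightarrow> Comp C g f \<in> Arr C"
  using dc unfolding is_dagger_category_def is_category_def by blast
lemma comp_dom: "f \<in> Arr C \<Longrightarrow> g \<in> Arr C \<Longrightarrow> Cod C f = Dom C g \<Longrightarrow> Dom C (Comp C g f) = Dom C f"
  using dc unfolding is_dagger_category_def is_category_def by blast
lemma comp_cod: "f \<in> Arr C \<Longrightarrow> g \<in> Arr C \<Longrightarrow> Cod C f = Dom C g \<Longrightarrow> Cod C (Comp C g f) = Cod C g"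
  using dc unfolding is_dagger_category_def is_category_def by blast
lemma idr: "f \<in> Arr C \<Longrightarrow> Comp C f (Idm C (Dom C f)) = f"
  using dc unfolding is_dagger_category_def is_category_def by blast
lemma idl: "f \<in> Arr C \<Longrightarrow> Comp C (Idm C (Cod C f)) f = f"
  using dc unfolding is_dagger_category_def is_category_def by blast
lemma assoc: "f \<in> Arr C \<Longrightarrow> g \<in> Arr C \<Longrightarrow> h \<in> Arr C \<Longrightarrow> Cod C f = Dom C g \<Longrightarrow> Cod C g = Dom C h \<Longrightarrow>
         Comp C h (Comp C g f) = Comp C (Comp C h g) f"
  using dc unfolding is_dagger_category_def is_category_def by blast
lemma dag_arr: "f \<in> Arr C \<Longrightarrow> Dag C f \<in> Arr C"
  using dc unfolding is_dagger_category_def by blast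
lemma dag_dom: "f \<in> Arr C \<Longrightarrow> Dom C (Dag C f) = Cod C f"
  using dc unfolding is_dagger_category_def by blast
lemma dag_cod: "f \<in> Arr C \<Longrightarrow> Cod C (Dag C f) = Dom C f"
  using dc unfolding is_dagger_category_def by blast
lemma dag_dag: "f \<in> Arr C \<Longrightarrow> Dag C (Dag C f) = f"
  using dc unfolding is_dagger_category_def by blast
lemma dag_id: "a \<in> Obj C \<Longrightarrow> Dag C (Idm C a) = Idm C a"
  using dc unfolding is_dagger_category_def by blast
lemma dag_comp: "f \<in> Arr C \<Longrightarrow> g \<in> Arr C \<Longrightarrow> Cod C f = Dom C g \<Longrightarrow>
         Dag C (Comp C g f) = Comp C (Dag C f) (Dag C g)"
  using dc unfolding is_dagger_category_def by blast

lemmas S = arr_dom arr_cod idm_arr idm_dom idm_cod comp_arr comp_dom comp_cod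
  dag_arr dag_dom dag_cod dag_dag

lemma iso_E:
  assumes "is_iso C f"
  obtains f' where "f \<in> Arr C" "f' \<in> Arr C" "Dom C f' = Cod C f" "Cod C f' = Dom C f"
    "Comp C f' f = Idm C (Dom C f)" "Comp C f f' = Idm C (Cod C f)"
  using assms unfolding is_iso_def by blast

lemma iso_I:
  assumes "f \<in> Arr C" "f' \<in> Arr C" "Dom C f' = Cod C f" "Cod C f' = Dom C f"
    "Comp C f' f = Idm C (Dom C f)" "Comp C f f' = Idm C (Cod C f)"
  shows "is_iso C f"
  using assms unfolding is_iso_def by blast

lemma iso_id: "a \<in> Obj C \<Longrightarrow> is_iso C (Idm C a)"
proof -
  assume a: "a \<in> Obj C"
  have "Comp C (Idm C a) (Idm C a) = Idm C a" using idl[of "Idm C a"] a by (simp add: S)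
  then show ?thesis using a by (intro iso_I[of _ "Idm C a"]) (simp_all add: S)
qed

lemma iso_comp:
  assumes "is_iso C f" "is_iso C g" "Cod C f = Dom C g"
  shows "is_iso C (Comp C g f)"
proof -
  obtain f' where f': "f \<in> Arr C" "f' \<in> Arr C" "Dom C f' = Cod C f" "Cod C f' = Dom C f"
    "Comp C f' f = Idm C (Dom C f)" "Comp C f f' = Idm C (Cod C f)"
    using assms(1) by (rule iso_E)
  obtain g' where g': "g \<in> Arr C" "g' \<in> Arr C" "Dom C g' = Cod C g" "Cod C g' = Dom C g"
    "Comp C g' g = Idm C (Dom C g)" "Comp C g g' = Idm C (Cod C g)"
    using assms(2) by (rule iso_E)
  note c = assms(3)
  have 1: "Comp C (Comp C f' g') (Comp C g f) = Idm C (Dom C f)"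
  proof -
    have "Comp C (Comp C f' g') (Comp C g f) = Comp C f' (Comp C g' (Comp C g f))"
      using assoc[of "Comp C g f" g' f'] f' g' c by (simp add: S)
    also have "Comp C g' (Comp C g f) = Comp C (Comp C g' g) f"
      using assoc[of f g g'] f' g' c by (simp add: S)
    also have "\<dots> = f" using g' c idl[of f] f' by simp
    finally show ?thesis using f' by simp
  qed
  have 2: "Comp C (Comp C g f) (Comp C f' g') = Idm C (Cod C g)"
  proof -
    have "Comp C (Comp C g f) (Comp C f' g') = Comp C g (Comp C f (Comp C f' g'))"
      using assoc[of "Comp C f' g'" f g] f' g' c by (simp add: S)
    also have "Comp C f (Comp C f' g') = Comp C (Comp C f f') g'"
      using assoc[of g' f' f] f' g' c by (simp add: S)
    also have "\<dots> = g'" using g' c idl[of g'] f' by simp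
    finally show ?thesis using g' by simp
  qed
  show ?thesis
  proof (rule iso_I[of "Comp C g f" "Comp C f' g'"])
    show a1: "Comp C g f \<in> Arr C" using comp_arr[of f g] f' g' c by blast
    show a2: "Comp C f' g' \<in> Arr C" using comp_arr[of g' f'] f' g' c by simp
    have d1: "Dom C (Comp C g f) = Dom C f" using comp_dom[of f g] f' g' c by blast
    have d2: "Cod C (Comp C g f) = Cod C g" using comp_cod[of f g] f' g' c by blast
    have d3: "Dom C (Comp C f' g') = Cod C g" using comp_dom[of g' f'] f' g' c by simp
    have d4: "Cod C (Comp C f' g') = Dom C f" using comp_cod[of g' f'] f' g' c by simp
    show "Dom C (Comp C f' g') = Cod C (Comp C g f)" using d2 d3 by simp
    show "Cod C (Comp C f' g') = Dom C (Comp C g f)" using d1 d4 by simp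
    show "Comp C (Comp C f' g') (Comp C g f) = Idm C (Dom C (Comp C g f))" using 1 d1 by simp
    show "Comp C (Comp C g f) (Comp C f' g') = Idm C (Cod C (Comp C g f))" using 2 d2 by simp
  qed
qed

lemma iso_dag: assumes "is_iso C f" shows "is_iso C (Dag C f)"
proof -
  obtain f' where f': "f \<in> Arr C" "f' \<in> Arr C" "Dom C f' = Cod C f" "Cod C f' = Dom C f"
    "Comp C f' f = Idm C (Dom C f)" "Comp C f f' = Idm C (Cod C f)"
    using assms(1) by (rule iso_E)
  have 1: "Comp C (Dag C f') (Dag C f) = Idm C (Dom C (Dag C f))"
    using dag_comp[of f' f] f' dag_id[of "Cod C f"] by (simp add: S)
  have 2: "Comp C (Dag C f) (Dag C f') = Idm C (Cod C (Dag C f))"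
    using dag_comp[of f f'] f' dag_id[of "Dom C f"] by (simp add: S)
  show ?thesis
    by (rule iso_I[OF _ _ _ _ 1 2]) (use f' in \<open>simp_all add: S\<close>)
qed

lemma unitary_iso: "is_unitary C u \<Longrightarrow> is_iso C u"
  unfolding is_unitary_def by (rule iso_I[of u "Dag C u"]) (simp_all add: S)

lemma iso_unitary:
  assumes "is_iso C u" "Comp C (Dag C u) u = Idm C (Dom C u)"
  shows "is_unitary C u"
proof -
  obtain v where v: "u \<in> Arr C" "v \<in> Arr C" "Dom C v = Cod C u" "Cod C v = Dom C u"
    "Comp C v u = Idm C (Dom C u)" "Comp C u v = Idm C (Cod C u)"
    using assms(1) by (rule iso_E)
  have "Dag C u = Comp C (Dag C u) (Idm C (Cod C u))" using idr[of "Dag C u"] v by (simp add: S)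
  also have "\<dots> = Comp C (Comp C (Dag C u) u) v" using assoc[of v u "Dag C u"] v by (simp add: S)
  also have "\<dots> = v" using assms(2) idl[of v] v by simp
  finally show ?thesis unfolding is_unitary_def using v assms by simp
qed

lemma isomorphic_refl: "a \<in> Obj C \<Longrightarrow> isomorphic C a a"
  unfolding isomorphic_def
  by (rule exI[of _ "Idm C a"]) (simp add: iso_id idm_dom idm_cod)

lemma isomorphic_trans: "isomorphic C a b \<Longrightarrow> isomorphic C b c \<Longrightarrow> isomorphic C a c"
proof -
  assume "isomorphic C a b" "isomorphic C b c"
  then obtain f g where fg: "is_iso C f" "Dom C f = a" "Cod C f = b" "is_iso C g" "Dom C g = b" "Cod C g = c"
    unfolding isomorphic_def by blast
  have fa: "f \<in> Arr C" using fg(1) by (rule iso_E)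
  have ga: "g \<in> Arr C" using fg(4) by (rule iso_E)
  have "is_iso C (Comp C g f)" using iso_comp[OF fg(1) fg(4)] fg by simp
  moreover have "Dom C (Comp C g f) = a" using comp_dom[OF fa ga] fg by simp
  moreover have "Cod C (Comp C g f) = c" using comp_cod[OF fa ga] fg by simp
  ultimately show ?thesis unfolding isomorphic_def by blast
qed

end

theorem mainTheorem4:
  fixes D :: "('o, 'm) dcat" and Fo :: "'o \<Rightarrow> nat" and Fm :: "'m \<Rightarrow> complex mat"
  assumes "is_dagger_category D"
    and "dagger_functor D Hilb Fo Fm"
    and "conservative D Hilb Fm"
    and "\<forall>f\<in>Arr D. Dom D f = Cod D f \<longrightarrow> positive D f \<longrightarrow> end_positive D f"
  shows "minimal D"
proof -
  interpret dc D by (rule dc.intro) (rule assms(1))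
  have FF: "functor_on D Hilb Fo Fm" using assms(2) unfolding dagger_functor_def by blast
  have Fcol: "\<And>f. f \<in> Arr D \<Longrightarrow> dim_col (Fm f) = Fo (Dom D f)"
    using FF unfolding functor_on_def Hilb_def by simp
  have Frow: "\<And>f. f \<in> Arr D \<Longrightarrow> dim_row (Fm f) = Fo (Cod D f)"
    using FF unfolding functor_on_def Hilb_def by simp
  have Fcomp: "\<And>f g. f \<in> Arr D \<Longrightarrow> g \<in> Arr D \<Longrightarrow> Cod D f = Dom D g \<Longrightarrow> Fm (Comp D g f) = Fm g * Fm f"
    using FF unfolding functor_on_def Hilb_def by simp
  have Fid: "\<And>a. a \<in> Obj D \<Longrightarrow> Fm (Idm D a) = 1\<^sub>m (Fo a)"
    using FF unfolding functor_on_def Hilb_def by simp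
  have Fiso: "\<exists>X. X * Fm f = 1\<^sub>m (Fo (Dom D f)) \<and> dim_row X = Fo (Dom D f) \<and> dim_col X = Fo (Cod D f)"
    if fi: "is_iso D f" for f
  proof -
    obtain f' where f': "f \<in> Arr D" "f' \<in> Arr D" "Dom D f' = Cod D f" "Cod D f' = Dom D f"
      "Comp D f' f = Idm D (Dom D f)" "Comp D f f' = Idm D (Cod D f)"
      using fi by (rule iso_E)
    have "Fm f' * Fm f = 1\<^sub>m (Fo (Dom D f))"
      using Fcomp[of f f'] f' Fid[of "Dom D f"] arr_dom by simp
    then show ?thesis using Fcol Frow f' by auto
  qed
  have key: "unitarily_isomorphic D a b" if ab: "isomorphic D a b" for a b
  proof -
    obtain f where f: "is_iso D f" "Dom D f = a" "Cod D f = b"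
      using ab unfolding isomorphic_def by blast
    have fA: "f \<in> Arr D" using f(1) unfolding is_iso_def by blast
    define p where "p = Comp D (Dag D f) f"
    have p: "p \<in> Arr D" "Dom D p = a" "Cod D p = a"
      using comp_arr[of f "Dag D f"] comp_dom[of f "Dag D f"] comp_cod[of f "Dag D f"] fA f
      unfolding p_def by (simp_all add: S)
    have "positive D p" unfolding positive_def using fA p p_def f by blast
    then have "end_positive D p" using assms(4) p by auto
    then obtain h where h: "h \<in> Arr D" "Dom D h = a" "Cod D h = a" "p = Comp D (Dag D h) h"
      unfolding end_positive_def using p by auto
    have pI: "is_iso D p" unfolding p_def
      using iso_comp[OF f(1) iso_dag[OF f(1)]] fA by (simp add: S)
    obtain X where X: "X * Fm p = 1\<^sub>m (Fo a)" "dim_row X = Fo a" "dim_col X = Fo a"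
      using Fiso[OF pI] p by auto
    have hd: "Dag D h \<in> Arr D" "Dom D (Dag D h) = a" "Cod D (Dag D h) = a"
      using dag_arr[of h] dag_dom[of h] dag_cod[of h] h by auto
    have hc: "Cod D h = Dom D (Dag D h)" using h(3) hd(2) by simp
    have Fp: "Fm p = Fm (Dag D h) * Fm h" unfolding h(4) by (rule Fcomp[OF h(1) hd(1) hc])
    have cH: "Fm h \<in> carrier_mat (Fo a) (Fo a)" "Fm (Dag D h) \<in> carrier_mat (Fo a) (Fo a)"
      "X \<in> carrier_mat (Fo a) (Fo a)"
      by (rule carrier_matI, use Frow[OF h(1)] h(3) in simp, use Fcol[OF h(1)] h(2) in simp)
        (rule carrier_matI, use Frow[OF hd(1)] hd(3) in simp, use Fcol[OF hd(1)] hd(2) in simp,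
         rule carrier_matI, use X in simp, use X in simp)
    have L: "(X * Fm (Dag D h)) * Fm h = 1\<^sub>m (Fo a)" using X Fp cH by simp
    have LC: "X * Fm (Dag D h) \<in> carrier_mat (Fo a) (Fo a)" using cH by simp
    have R: "Fm h * (X * Fm (Dag D h)) = 1\<^sub>m (Fo a)"
      by (rule mat_mult_left_right_inverse[OF LC cH(1) L])
    have dh: "dim_row (Fm h) = Fo a" "dim_col (Fm h) = Fo a" using cH(1) by auto
    have dG: "dim_row (X * Fm (Dag D h)) = Fo a" "dim_col (X * Fm (Dag D h)) = Fo a" using LC by auto
    have "is_iso Hilb (Fm h)" unfolding is_iso_def Hilb_def dcat.simps
      by (intro conjI UNIV_I bexI[of _ "X * Fm (Dag D h)"]) (simp_all only: dh dG L R)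
    then have hI: "is_iso D h" using assms(3) h unfolding conservative_def by blast
    then obtain k where k: "h \<in> Arr D" "k \<in> Arr D" "Dom D k = Cod D h" "Cod D k = Dom D h"
      "Comp D k h = Idm D (Dom D h)" "Comp D h k = Idm D (Cod D h)"
      by (rule iso_E)
    have kI: "is_iso D k" using k by (intro iso_I[of k h]) auto
    define u where "u = Comp D f k"
    have u: "u \<in> Arr D" "Dom D u = a" "Cod D u = b"
      using comp_arr[of k f] comp_dom[of k f] comp_cod[of k f] k fA f h unfolding u_def by auto
    have uI: "is_iso D u" unfolding u_def using iso_comp[OF kI f(1)] k f h by simp
    have aO: "a \<in> Obj D" using h arr_dom by blast
    have e1: "Dag D u = Comp D (Dag D k) (Dag D f)"
      unfolding u_def using dag_comp[of k f] k fA f h by simp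
    have e2: "Comp D (Comp D (Dag D k) (Dag D f)) (Comp D f k)
        = Comp D (Dag D k) (Comp D (Dag D f) (Comp D f k))"
      using assoc[of "Comp D f k" "Dag D f" "Dag D k"] k fA f h
      by (simp add: S)
    have e3: "Comp D (Dag D f) (Comp D f k) = Comp D p k"
      unfolding p_def using assoc[of k f "Dag D f"] k fA f h by (simp add: S)
    have e4: "Comp D p k = Comp D (Dag D h) (Comp D h k)"
      using assoc[of k h "Dag D h"] h k by (simp add: S)
    have e5: "Comp D (Dag D h) (Comp D h k) = Dag D h"
      using k h idr[of "Dag D h"] by (simp add: S)
    have e6: "Comp D (Dag D k) (Dag D h) = Idm D a"
      using dag_comp[of k h] k h dag_id[OF aO] by simp
    have "Comp D (Dag D u) u = Idm D (Dom D u)"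
      using e1 e2 e3 e4 e5 e6 u u_def by simp
    then have "is_unitary D u" using iso_unitary uI by blast
    then show ?thesis unfolding unitarily_isomorphic_def using u by blast
  qed
  have eq: "\<And>a b. unitarily_isomorphic D a b = isomorphic D a b"
    using key unitary_iso unfolding unitarily_isomorphic_def isomorphic_def by blast
  have Q: "unitary_classes D = iso_classes D"
    unfolding unitary_classes_def iso_classes_def eq ..
  have cm: "class_map D X = X" if XQ: "X \<in> iso_classes D" for X
  proof -
    obtain a where a: "a \<in> Obj D" "X = {b. b \<in> Obj D \<and> isomorphic D a b}"
      using XQ unfolding iso_classes_def quotient_def by auto
    show ?thesis unfolding class_map_def a(2)
      using isomorphic_refl isomorphic_trans a(1) by blast
  qed
  show ?thesis unfolding minimal_def Q
    using bij_betw_cong[of "iso_classes D" "class_map D" id] cm by simp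
qed

end
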